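(* For every $n\ge 3$, the strong metric dimension of the convex polytope graph $S_n$ satisfies $sdim(S_n)=n$ if $n$ is odd and $sdim(S_n)=\frac{3n}{2}$ if $n$ is even.
   Context: For $n\ge 3$, $S_n$ is the graph with vertex set $\{a_i,b_i,c_i,d_i : 1\le i\le n\}$ and edge set $\{a_ia_{i+1}, b_ib_{i+1}, c_ic_{i+1}, d_id_{i+1}, a_{i+1}b_i, a_ib_i, b_ic_i, c_id_i : 1\le i\le n\}$, indices taken modulo $n$. $d(u,v)$ is the graph distance. A vertex $w$ strongly resolves distinct vertices $u,v$ if $d(v,w)=d(v,u)+d(u,w)$ or $d(u,w)=d(u,v)+d(v,w)$. A set $S$ of vertices is a strong resolving set if every two distinct vertices are strongly resolved by some vertex of $S$; $sdim(G)$ is the minimum cardinality of a strong resolving set of $G$. *)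

theory Defs
  imports Main
begin

text \<open>Generic notions for a (finite, undirected) graph given by a vertex set V and a
symmetric edge relation E (a set of ordered pairs).\<close>

definition gdist :: "('a \<times> 'a) set \<Rightarrow> 'a \<Rightarrow> 'a \<Rightarrow> nat" where
  "gdist E u v = (LEAST k. (u, v) \<in> E ^^ k)"

definition strongly_resolves :: "('a \<times> 'a) set \<Rightarrow> 'a \<Rightarrow> 'a \<Rightarrow> 'a \<Rightarrow> bool" where
  "strongly_resolves E w u v \<longleftrightarrow>
     gdist E v w = gdist E v u + gdist E u w \<or> gdist E u w = gdist E u v + gdist E v w"

definition strong_resolving_set :: "'a set \<Rightarrow> ('a \<times> 'a) set \<Rightarrow> 'a set \<Rightarrow> bool" where
  "strong_resolving_set V E S \<longleftrightarrow> S \<subseteq> V \<and>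
     (\<forall>u\<in>V. \<forall>v\<in>V. u \<noteq> v \<longrightarrow> (\<exists>w\<in>S. strongly_resolves E w u v))"

definition sdim :: "'a set \<Rightarrow> ('a \<times> 'a) set \<Rightarrow> nat" where
  "sdim V E = (LEAST k. \<exists>S. strong_resolving_set V E S \<and> card S = k)"

text \<open>The convex polytope graph S_n. Vertices a_i, b_i, c_i, d_i with indices
i in {0..n-1} (the paper's indices 1..n, shifted; taken modulo n).\<close>

datatype pvert = PA nat | PB nat | PC nat | PD nat

definition Sn_verts :: "nat \<Rightarrow> pvert set" where
  "Sn_verts n = {PA i | i. i < n} \<union> {PB i | i. i < n} \<union> {PC i | i. i < n} \<union> {PD i | i. i < n}"

definition Sn_edges :: "nat \<Rightarrow> (pvert \<times> pvert) set" where
  "Sn_edges n =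
     {(PA i, PA ((i + 1) mod n)) | i. i < n} \<union>
     {(PB i, PB ((i + 1) mod n)) | i. i < n} \<union>
     {(PC i, PC ((i + 1) mod n)) | i. i < n} \<union>
     {(PD i, PD ((i + 1) mod n)) | i. i < n} \<union>
     {(PA ((i + 1) mod n), PB i) | i. i < n} \<union>
     {(PA i, PB i) | i. i < n} \<union>
     {(PB i, PC i) | i. i < n} \<union>
     {(PC i, PD i) | i. i < n}"

definition Sn_adj :: "nat \<Rightarrow> (pvert \<times> pvert) set" where
  "Sn_adj n = Sn_edges n \<union> (Sn_edges n)\<inverse>"

end

theory Submission
  imports Defs
begin

locale gm =
  fixes V :: "'a set" and E :: "('a \<times> 'a) set" and D :: "'a \<Rightarrow> 'a \<Rightarrow> nat"
  assumes E_sub: "E \<subseteq> V \<times> V"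
    and E_sym: "(x, y) \<in> E \<Longrightarrow> (y, x) \<in> E"
    and D_refl: "u \<in> V \<Longrightarrow> D u u = 0"
    and D_pos: "u \<in> V \<Longrightarrow> v \<in> V \<Longrightarrow> u \<noteq> v \<Longrightarrow> D u v > 0"
    and D_sym: "D u v = D v u"
    and D_lip: "u \<in> V \<Longrightarrow> (x, y) \<in> E \<Longrightarrow> D u y \<le> D u x + 1"
    and D_pred: "u \<in> V \<Longrightarrow> v \<in> V \<Longrightarrow> D u v > 0 \<Longrightarrow> \<exists>y. (y, v) \<in> E \<and> D u y + 1 = D u v"
    and V_fin: "finite V"
begin

lemma path_exists: "u \<in> V \<Longrightarrow> v \<in> V \<Longrightarrow> (u, v) \<in> E ^^ (D u v)"
proof (induction "D u v" arbitrary: v)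
  case 0
  then have "u = v" using D_pos by fastforce
  then show ?case using 0(1)[symmetric] by simp
next
  case (Suc k)
  then obtain y where y: "(y, v) \<in> E" "D u y + 1 = D u v" using D_pred by fastforce
  have yV: "y \<in> V" using y E_sub by auto
  have "(u, y) \<in> E ^^ k" using Suc.hyps(1)[of y] Suc.hyps(2) Suc.prems yV y by (metis Suc_eq_plus1 add_right_cancel)
  then show ?case using y Suc(2) by (metis relpow_Suc_I)
qed

lemma path_lower: "u \<in> V \<Longrightarrow> (u, v) \<in> E ^^ k \<Longrightarrow> D u v \<le> k"
proof (induction k arbitrary: v)
  case 0
  then show ?case using D_refl by simp
next
  case (Suc k)
  then obtain y where "(u, y) \<in> E ^^ k" "(y, v) \<in> E" by auto
  then show ?case using Suc D_lip[of u y v] by fastforce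
qed

lemma gdist_eq: "u \<in> V \<Longrightarrow> v \<in> V \<Longrightarrow> gdist E u v = D u v"
  unfolding gdist_def
  by (rule Least_equality) (auto intro: path_exists path_lower)

lemma tri: "u \<in> V \<Longrightarrow> v \<in> V \<Longrightarrow> w \<in> V \<Longrightarrow> D u w \<le> D u v + D v w"
proof (induction "D v w" arbitrary: w)
  case 0
  then have "v = w" using D_pos by fastforce
  then show ?case by simp
next
  case (Suc k)
  then obtain y where y: "(y, w) \<in> E" "D v y + 1 = D v w" using D_pred by fastforce
  have yV: "y \<in> V" using y E_sub by auto
  have "D u y \<le> D u v + D v y" using Suc yV y by simp
  moreover have "D u w \<le> D u y + 1" using D_lip Suc.prems y by blast
  ultimately show ?case using y by simp
qed

definition mmd :: "'a \<Rightarrow> 'a \<Rightarrow> bool" where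
  "mmd u v \<longleftrightarrow> (\<forall>x. (u, x) \<in> E \<longrightarrow> D x v \<le> D u v) \<and> (\<forall>y. (v, y) \<in> E \<longrightarrow> D u y \<le> D u v)"

lemma mmd_sym: "mmd u v \<Longrightarrow> mmd v u"
  unfolding mmd_def using D_sym by metis

lemma mmd_half:
  assumes "u \<in> V" "v \<in> V" "w \<in> V" "mmd u v" "D v w = D v u + D u w"
  shows "w = u"
proof (rule ccontr)
  assume "w \<noteq> u"
  then have "D w u > 0" using D_pos assms by auto
  then obtain y where y: "(y, u) \<in> E" "D w y + 1 = D w u" using D_pred assms by blast
  have yV: "y \<in> V" using y E_sub by auto
  have "(u, y) \<in> E" using E_sym y by blast
  then have "D y v \<le> D u v" using assms(4) unfolding mmd_def by blast
  moreover have "D v w \<le> D v y + D y w" using tri assms yV by blast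
  ultimately show False using assms(5) y D_sym[of w y] D_sym[of w u] D_sym[of y v] D_sym[of u v]
    by linarith
qed

lemma mmd_not_resolved:
  assumes "u \<in> V" "v \<in> V" "w \<in> V" "mmd u v" "strongly_resolves E w u v"
  shows "w = u \<or> w = v"
proof -
  have "D v w = D v u + D u w \<or> D u w = D u v + D v w"
    using assms(5) unfolding strongly_resolves_def using gdist_eq assms by simp
  then show ?thesis using mmd_half[OF assms(1-4)] mmd_half[OF assms(2,1,3) mmd_sym[OF assms(4)]]
    by blast
qed

lemma cover_resolves:
  assumes S: "S \<subseteq> V" and cov: "\<And>u v. u \<in> V \<Longrightarrow> v \<in> V \<Longrightarrow> u \<noteq> v \<Longrightarrow> mmd u v \<Longrightarrow> u \<in> S \<or> v \<in> S"
    and uv: "u \<in> V" "v \<in> V" "u \<noteq> v"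
  shows "\<exists>w\<in>S. strongly_resolves E w u v"
proof -
  define P where "P k \<longleftrightarrow> (\<exists>a b. a \<in> V \<and> b \<in> V \<and> D a b = D a u + D u v + D v b \<and> D a b = k)" for k
  define B where "B = Max ((\<lambda>(a, b). D a b) ` (V \<times> V))"
  have P0: "P (D u v)" unfolding P_def using uv D_refl by (intro exI[of _ u] exI[of _ v]) auto
  have bound: "\<forall>k. P k \<longrightarrow> k < Suc B"
    unfolding P_def B_def using V_fin
    by (auto simp: less_Suc_eq_le intro!: Max_ge)
  obtain k where k: "P k" "\<forall>k'. P k' \<longrightarrow> k' \<le> k"
    using ex_has_greatest_nat[where f="\<lambda>x. x", OF P0 bound] by blast
  then obtain a b where ab: "a \<in> V" "b \<in> V" "D a b = D a u + D u v + D v b" "D a b = k"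
    unfolding P_def by blast
  have mmd: "mmd a b"
    unfolding mmd_def
  proof safe
    fix x assume x: "(a, x) \<in> E"
    have xV: "x \<in> V" using x E_sub by auto
    show "D x b \<le> D a b"
    proof (rule ccontr)
      assume c: "\<not> D x b \<le> D a b"
      have "D b x \<le> D b a + 1" using D_lip ab x by blast
      have "D x u \<le> D a u + 1" using D_lip[of u a x] x uv D_sym by (metis)
      have "D x b \<le> D x u + D u b" using tri xV uv ab by blast
      have "D u b \<le> D u v + D v b" using tri uv ab by blast
      have "P (D x b)" unfolding P_def
        using xV ab \<open>D b x \<le> D b a + 1\<close> \<open>D x u \<le> D a u + 1\<close> \<open>D x b \<le> D x u + D u b\<close>
          \<open>D u b \<le> D u v + D v b\<close> c D_sym[of b x] D_sym[of b a]
        by (intro exI[of _ x] exI[of _ b]) auto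
      then show False using k ab c by auto
    qed
  next
    fix y assume y: "(b, y) \<in> E"
    have yV: "y \<in> V" using y E_sub by auto
    show "D a y \<le> D a b"
    proof (rule ccontr)
      assume c: "\<not> D a y \<le> D a b"
      have "D a y \<le> D a b + 1" using D_lip ab y by blast
      have "D v y \<le> D v b + 1" using D_lip[of v b y] y uv by blast
      have "D a y \<le> D a v + D v y" using tri yV uv ab by blast
      have "D a v \<le> D a u + D u v" using tri uv ab by blast
      have "P (D a y)" unfolding P_def
        using yV ab \<open>D a y \<le> D a b + 1\<close> \<open>D v y \<le> D v b + 1\<close> \<open>D a y \<le> D a v + D v y\<close>
          \<open>D a v \<le> D a u + D u v\<close> c
        by (intro exI[of _ a] exI[of _ y]) auto
      then show False using k ab c by auto
    qed
  qed
  have "D u v > 0" using D_pos uv by auto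
  then have "a \<noteq> b" using ab D_refl by auto
  then have "a \<in> S \<or> b \<in> S" using cov ab mmd by blast
  then show ?thesis
  proof
    assume aS: "a \<in> S"
    have "D a b \<le> D a v + D v b" using tri ab uv by blast
    moreover have "D a v \<le> D a u + D u v" using tri ab uv by blast
    ultimately have "D v a = D v u + D u a" using ab D_sym by (metis add.commute add_le_cancel_right le_antisym)
    then have "strongly_resolves E a u v" unfolding strongly_resolves_def
      using gdist_eq uv ab by simp
    then show ?thesis using aS by blast
  next
    assume bS: "b \<in> S"
    have "D a b \<le> D a u + D u b" using tri ab uv by blast
    moreover have "D u b \<le> D u v + D v b" using tri ab uv by blast
    ultimately have "D u b = D u v + D v b" using ab by linarith
    then have "strongly_resolves E b u v" unfolding strongly_resolves_def
      using gdist_eq uv ab by simp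
    then show ?thesis using bS by blast
  qed
qed

end


definition cdi :: "int \<Rightarrow> int \<Rightarrow> int \<Rightarrow> int" where
  "cdi N p q = min \<bar>p - q\<bar> (N - \<bar>p - q\<bar>)"
lemma cdi_move:
  "0 \<le> p \<Longrightarrow> p < N \<Longrightarrow> 0 \<le> q \<Longrightarrow> q < N \<Longrightarrow> 0 \<le> q' \<Longrightarrow> q' < N \<Longrightarrow> 0 \<le> k \<Longrightarrow> (q' = q+k \<or> q'+N = q+k \<or> q = q'+k \<or> q+N = q'+k)
   \<Longrightarrow> cdi N p q' \<le> cdi N p q + k"
  unfolding cdi_def by (elim disjE; auto simp: min_def abs_if split: if_splits)
lemma cdi_toward:
  "0 \<le> p \<Longrightarrow> p < N \<Longrightarrow> 0 \<le> q \<Longrightarrow> q < N \<Longrightarrow> 0 \<le> k \<Longrightarrow> k \<le> cdi N p q \<Longrightarrow> 0 \<le> q1 \<Longrightarrow> q1 < N \<Longrightarrow> 0 \<le> q2 \<Longrightarrow> q2 < N \<Longrightarrow> (q1 = q+k \<or> q1+N = q+k)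
   \<Longrightarrow> (q2+k = q \<or> q2+k = q+N) \<Longrightarrow> cdi N p q1 + k = cdi N p q \<or> cdi N p q2 + k = cdi N p q"
  unfolding cdi_def by (elim disjE; auto simp: min_def abs_if split: if_splits)
lemma cdi_away:
  "0 \<le> p \<Longrightarrow> p < N \<Longrightarrow> 0 \<le> q \<Longrightarrow> q < N \<Longrightarrow> 0 \<le> k \<Longrightarrow> 2 * (cdi N p q + k) \<le> N \<Longrightarrow> 0 \<le> q1 \<Longrightarrow> q1 < N \<Longrightarrow> 0 \<le> q2 \<Longrightarrow> q2 < N \<Longrightarrow> (q1 = q+k \<or> q1+N = q+k)
   \<Longrightarrow> (q2+k = q \<or> q2+k = q+N) \<Longrightarrow> cdi N p q1 = cdi N p q + k \<or> cdi N p q2 = cdi N p q + k"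
  unfolding cdi_def by (elim disjE; auto simp: min_def abs_if split: if_splits)
lemma cdi_le: "2 * cdi N p q \<le> N"
  unfolding cdi_def by (auto simp: min_def)
lemma cdi_nonneg: "0 \<le> p \<Longrightarrow> p < N \<Longrightarrow> 0 \<le> q \<Longrightarrow> q < N \<Longrightarrow> 0 \<le> cdi N p q"
  unfolding cdi_def by (auto simp: min_def abs_if)
lemma cdi_sym: "cdi N p q = cdi N q p"
  unfolding cdi_def by (simp add: abs_minus_commute)
lemma cdi_self: "0 \<le> N \<Longrightarrow> cdi N p p = 0"
  unfolding cdi_def by (auto simp: min_def)
lemma cdi_zero: "0 \<le> p \<Longrightarrow> p < N \<Longrightarrow> 0 \<le> q \<Longrightarrow> q < N \<Longrightarrow> cdi N p q = 0 \<Longrightarrow> p = q"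
  unfolding cdi_def by (auto simp: min_def abs_if split: if_splits)
lemma cdi_le_abs: "cdi N p q \<le> \<bar>p - q\<bar>"
  unfolding cdi_def by simp
lemma cdi_even1: "even (cdi (2*n) (2*a+1) (2*b+1))"
proof -
  have "even \<bar>(2*a+1) - (2*b+1)\<bar>" by simp
  then show ?thesis unfolding cdi_def min_def by auto
qed
lemma cdi_even0: "even (cdi (2*n) (2*a) (2*b))"
proof -
  have "even \<bar>(2*a) - (2*b)\<bar>" by simp
  then show ?thesis unfolding cdi_def min_def by auto
qed
definition sc :: "nat \<Rightarrow> nat \<Rightarrow> nat" where "sc n i = (if Suc i < n then Suc i else 0)"
lemma mod_sc: "i < n \<Longrightarrow> Suc i mod n = sc n i"
  unfolding sc_def by (cases "Suc i < n") (auto simp: Suc_lessI dest: Suc_lessI)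
lemma sc_lt: "i < n \<Longrightarrow> sc n i < n" unfolding sc_def by auto

lemma adj_AA: "(PA i, PA j) \<in> Sn_adj n \<longleftrightarrow> i < n \<and> j < n \<and> (j = sc n i \<or> i = sc n j)"
  unfolding Sn_adj_def Sn_edges_def by (auto simp: mod_sc sc_lt)
lemma adj_AB: "(PA i, PB j) \<in> Sn_adj n \<longleftrightarrow> i < n \<and> j < n \<and> (i = sc n j \<or> i = j)"
  unfolding Sn_adj_def Sn_edges_def by (auto simp: mod_sc sc_lt)
lemma adj_BA: "(PB j, PA i) \<in> Sn_adj n \<longleftrightarrow> i < n \<and> j < n \<and> (i = sc n j \<or> i = j)"
  unfolding Sn_adj_def Sn_edges_def by (auto simp: mod_sc sc_lt)
lemma adj_BB: "(PB i, PB j) \<in> Sn_adj n \<longleftrightarrow> i < n \<and> j < n \<and> (j = sc n i \<or> i = sc n j)"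
  unfolding Sn_adj_def Sn_edges_def by (auto simp: mod_sc sc_lt)
lemma adj_CC: "(PC i, PC j) \<in> Sn_adj n \<longleftrightarrow> i < n \<and> j < n \<and> (j = sc n i \<or> i = sc n j)"
  unfolding Sn_adj_def Sn_edges_def by (auto simp: mod_sc sc_lt)
lemma adj_DD: "(PD i, PD j) \<in> Sn_adj n \<longleftrightarrow> i < n \<and> j < n \<and> (j = sc n i \<or> i = sc n j)"
  unfolding Sn_adj_def Sn_edges_def by (auto simp: mod_sc sc_lt)
lemma adj_BC: "(PB i, PC j) \<in> Sn_adj n \<longleftrightarrow> i < n \<and> i = j"
  unfolding Sn_adj_def Sn_edges_def by (auto simp: mod_sc sc_lt)
lemma adj_CB: "(PC i, PB j) \<in> Sn_adj n \<longleftrightarrow> i < n \<and> i = j"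
  unfolding Sn_adj_def Sn_edges_def by (auto simp: mod_sc sc_lt)
lemma adj_CD: "(PC i, PD j) \<in> Sn_adj n \<longleftrightarrow> i < n \<and> i = j"
  unfolding Sn_adj_def Sn_edges_def by (auto simp: mod_sc sc_lt)
lemma adj_DC: "(PD i, PC j) \<in> Sn_adj n \<longleftrightarrow> i < n \<and> i = j"
  unfolding Sn_adj_def Sn_edges_def by (auto simp: mod_sc sc_lt)
lemma adj_other: "(PA i, PC j) \<notin> Sn_adj n" "(PA i, PD j) \<notin> Sn_adj n" "(PB i, PD j) \<notin> Sn_adj n"
  "(PC i, PA j) \<notin> Sn_adj n" "(PD i, PA j) \<notin> Sn_adj n" "(PD i, PB j) \<notin> Sn_adj n"
  unfolding Sn_adj_def Sn_edges_def by auto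

definition pr :: "nat \<Rightarrow> nat \<Rightarrow> nat" where "pr n i = (if i = 0 then n - 1 else i - 1)"
lemma pr_lt: "i < n \<Longrightarrow> pr n i < n" unfolding pr_def by auto
lemma sc_pr: "i < n \<Longrightarrow> sc n (pr n i) = i" unfolding sc_def pr_def by auto
lemma sc_pos: "i < n \<Longrightarrow> 2 * int (sc n i) = 2 * int i + 2 \<or> 2 * int (sc n i) + 2 * int n = 2 * int i + 2"
  unfolding sc_def by auto
lemma pr_pos: "i < n \<Longrightarrow> 2 * int (pr n i) + 2 = 2 * int i \<or> 2 * int (pr n i) + 2 = 2 * int i + 2 * int n"
  unfolding pr_def by auto

lemmas adj_simps = adj_AA adj_AB adj_BA adj_BB adj_CC adj_DD adj_BC adj_CB adj_CD adj_DC adj_other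

lemma V_simps[simp]: "PA i \<in> Sn_verts n \<longleftrightarrow> i < n" "PB i \<in> Sn_verts n \<longleftrightarrow> i < n"
  "PC i \<in> Sn_verts n \<longleftrightarrow> i < n" "PD i \<in> Sn_verts n \<longleftrightarrow> i < n"
  unfolding Sn_verts_def by auto

lemma adj_V: "(x, y) \<in> Sn_adj n \<Longrightarrow> x \<in> Sn_verts n \<and> y \<in> Sn_verts n"
  by (cases x; cases y) (auto simp: adj_simps sc_lt)

fun lev :: "pvert \<Rightarrow> int" where
  "lev (PA i) = 0" | "lev (PB i) = 0" | "lev (PC i) = 1" | "lev (PD i) = 2"
fun pos :: "pvert \<Rightarrow> int" where
  "pos (PA i) = 2 * int i" | "pos (PB i) = 2 * int i + 1" | "pos (PC i) = 2 * int i + 1" | "pos (PD i) = 2 * int i + 1"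

definition Di :: "nat \<Rightarrow> pvert \<Rightarrow> pvert \<Rightarrow> int" where
  "Di n x y = \<bar>lev x - lev y\<bar> + (cdi (2 * int n) (pos x) (pos y) + 1) div 2"

lemma pos_lt: "v \<in> Sn_verts n \<Longrightarrow> pos v < 2 * int n"
  by (cases v) auto
lemma pos_ge: "0 \<le> pos v"
  by (cases v) auto
lemma lev_le: "0 \<le> lev v \<and> lev v \<le> 2" by (cases v) auto

lemma Di_nonneg: "u \<in> Sn_verts n \<Longrightarrow> v \<in> Sn_verts n \<Longrightarrow> 0 \<le> Di n u v"
  unfolding Di_def using cdi_nonneg[OF pos_ge pos_lt pos_ge pos_lt, of u n v] by simp

lemma Di_sym: "Di n u v = Di n v u"
  unfolding Di_def using cdi_sym by (simp add: abs_minus_commute)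

lemma pos_lev_inj: "pos u = pos v \<Longrightarrow> lev u = lev v \<Longrightarrow> u = v"
  by (cases u; cases v) (auto, presburger+)

lemma Di_zero: "u \<in> Sn_verts n \<Longrightarrow> v \<in> Sn_verts n \<Longrightarrow> Di n u v = 0 \<Longrightarrow> u = v"
proof -
  assume a: "u \<in> Sn_verts n" "v \<in> Sn_verts n" "Di n u v = 0"
  have c: "0 \<le> cdi (2 * int n) (pos u) (pos v)" using cdi_nonneg[OF pos_ge pos_lt pos_ge pos_lt, of u n v] a by simp
  then have "lev u = lev v" "cdi (2 * int n) (pos u) (pos v) = 0" using a(3) unfolding Di_def by presburger+
  then show ?thesis using cdi_zero[OF pos_ge pos_lt pos_ge pos_lt, of u n v] a pos_lev_inj by blast
qed

lemma Di_self: "Di n u u = 0"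
  unfolding Di_def using cdi_self[of "2 * int n" "pos u"] by simp

definition rel :: "int \<Rightarrow> int \<Rightarrow> int \<Rightarrow> int \<Rightarrow> bool" where
  "rel N p q k \<longleftrightarrow> (q = p+k \<or> q+N = p+k \<or> p = q+k \<or> p+N = q+k)"

definition near :: "nat \<Rightarrow> pvert \<Rightarrow> pvert \<Rightarrow> bool" where
  "near n x y \<longleftrightarrow> (lev x = lev y \<and> (rel (2 * int n) (pos x) (pos y) 1 \<or> rel (2 * int n) (pos x) (pos y) 2))
     \<or> (pos x = pos y \<and> \<bar>lev x - lev y\<bar> = 1)"

lemma adj_near: assumes "(x, y) \<in> Sn_adj n" shows "near n x y"
proof (cases x)
  case (PA i)
  then show ?thesis using assms
    by (cases y) (auto simp: adj_simps near_def rel_def sc_def split: if_splits)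
next
  case (PB i)
  then show ?thesis using assms
    by (cases y) (auto simp: adj_simps near_def rel_def sc_def split: if_splits)
next
  case (PC i)
  then show ?thesis using assms
    by (cases y) (auto simp: adj_simps near_def rel_def sc_def split: if_splits)
next
  case (PD i)
  then show ?thesis using assms
    by (cases y) (auto simp: adj_simps near_def rel_def sc_def split: if_splits)
qed



lemma div_step: "c' \<le> c + 2 \<Longrightarrow> (c' + 1) div 2 \<le> (c + 1) div 2 + (1::int)"
  by presburger

lemma Di_lip: assumes "u \<in> Sn_verts n" "(x, y) \<in> Sn_adj n" shows "Di n u y \<le> Di n u x + 1"
proof -
  have V: "x \<in> Sn_verts n" "y \<in> Sn_verts n" using adj_V assms by auto
  have nr: "near n x y" using adj_near assms by blast
  let ?N = "2 * int n"
  show ?thesis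
  proof (cases "lev x = lev y")
    case True
    then have r: "rel ?N (pos x) (pos y) 1 \<or> rel ?N (pos x) (pos y) 2" using nr unfolding near_def by auto
    have "cdi ?N (pos u) (pos y) \<le> cdi ?N (pos u) (pos x) + 2"
    proof -
      from r obtain k where k: "0 \<le> k" "k \<le> 2" "rel ?N (pos x) (pos y) k"
        by (metis one_le_numeral zero_le_numeral zero_le_one order_refl)
      have "cdi ?N (pos u) (pos y) \<le> cdi ?N (pos u) (pos x) + k"
        apply (rule cdi_move)
        using k pos_ge pos_lt assms V unfolding rel_def by auto
      then show ?thesis using k by linarith
    qed
    then show ?thesis unfolding Di_def using True div_step by fastforce
  next
    case False
    then have "pos x = pos y" "\<bar>lev x - lev y\<bar> = 1" using nr unfolding near_def by auto
    then show ?thesis unfolding Di_def by auto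
  qed
qed

lemma div_tow: "k = 2 \<or> (k = 1 \<and> odd c) \<Longrightarrow> c' + k = c \<Longrightarrow> (c' + 1) div 2 + 1 = (c + 1) div 2 "
  for c :: int by (elim disjE; auto; presburger)

lemma Di_tow:
  assumes V: "u \<in> Sn_verts n" "v \<in> Sn_verts n" "y1 \<in> Sn_verts n" "y2 \<in> Sn_verts n"
    and lv: "lev y1 = lev v" "lev y2 = lev v"
    and kk: "k = 2 \<or> (k = 1 \<and> odd (cdi (2 * int n) (pos u) (pos v)))"
    and kc: "k \<le> cdi (2 * int n) (pos u) (pos v)"
    and r1: "pos y1 = pos v + k \<or> pos y1 + 2 * int n = pos v + k"
    and r2: "pos y2 + k = pos v \<or> pos y2 + k = pos v + 2 * int n"
  shows "Di n u y1 + 1 = Di n u v \<or> Di n u y2 + 1 = Di n u v"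
proof -
  have "cdi (2 * int n) (pos u) (pos y1) + k = cdi (2 * int n) (pos u) (pos v) \<or>
        cdi (2 * int n) (pos u) (pos y2) + k = cdi (2 * int n) (pos u) (pos v)"
    apply (rule cdi_toward)
    using V pos_ge pos_lt kk kc r1 r2 by auto
  then show ?thesis unfolding Di_def using lv div_tow[OF kk] by fastforce
qed

lemma Di_pred:
  assumes uV: "u \<in> Sn_verts n" and vV: "v \<in> Sn_verts n" and pos: "Di n u v > 0"
  shows "\<exists>y. (y, v) \<in> Sn_adj n \<and> Di n u y + 1 = Di n u v"
proof -
  let ?N = "2 * int n"
  let ?c = "cdi ?N (pos u) (pos v)"
  have c0: "0 \<le> ?c" using cdi_nonneg[OF pos_ge pos_lt pos_ge pos_lt, of u n v] uV vV by simp
  have cz: "?c = 0 \<Longrightarrow> pos u = pos v" using cdi_zero[OF pos_ge pos_lt pos_ge pos_lt, of u n v] uV vV by simp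
  have lu: "0 \<le> lev u" "lev u \<le> 2" using lev_le by auto
  have ne: "u \<noteq> v" using pos Di_self by auto
  show ?thesis
  proof (cases v)
    case (PA j)
    have j: "j < n" using vV PA by simp
    show ?thesis
    proof (cases "odd ?c")
      case True
      then have "1 \<le> ?c" using c0 by (cases "?c = 0") auto
      then have "Di n u (PB j) + 1 = Di n u v \<or> Di n u (PB (pr n j)) + 1 = Di n u v"
        using Di_tow[OF uV vV, of "PB j" "PB (pr n j)" 1] PA j True pr_lt[OF j] pr_pos[OF j] by auto
      moreover have "(PB j, v) \<in> Sn_adj n" "(PB (pr n j), v) \<in> Sn_adj n"
        using PA j by (auto simp: adj_simps pr_lt sc_pr)
      ultimately show ?thesis by blast
    next
      case False
      have "?c \<noteq> 0"
      proof
        assume "?c = 0"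
        then have "pos u = 2 * int j" using cz PA by simp
        then have "u = v" using PA by (cases u) (auto, presburger+)
        then show False using ne by simp
      qed
      then have "2 \<le> ?c" using c0 False by presburger
      then have "Di n u (PA (sc n j)) + 1 = Di n u v \<or> Di n u (PA (pr n j)) + 1 = Di n u v"
        using Di_tow[OF uV vV, of "PA (sc n j)" "PA (pr n j)" 2] PA j pr_lt[OF j] pr_pos[OF j]
          sc_lt[OF j] sc_pos[OF j] by auto
      moreover have "(PA (sc n j), v) \<in> Sn_adj n" "(PA (pr n j), v) \<in> Sn_adj n"
        using PA j by (auto simp: adj_simps pr_lt sc_pr sc_lt)
      ultimately show ?thesis by blast
    qed
  next
    case (PB j)
    have j: "j < n" using vV PB by simp
    show ?thesis
    proof (cases "lev u \<ge> 1")
      case True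
      have "Di n u (PC j) + 1 = Di n u v" using PB True unfolding Di_def by auto
      moreover have "(PC j, v) \<in> Sn_adj n" using PB j by (auto simp: adj_simps)
      ultimately show ?thesis by blast
    next
      case False
      then have l0: "lev u = 0" using lu by auto
      have "?c \<noteq> 0"
      proof
        assume "?c = 0"
        then have "pos u = pos v" using cz by simp
        then have "u = v" using PB l0 pos_lev_inj by simp
        then show False using ne by simp
      qed
      show ?thesis
      proof (cases "?c = 1")
        case True
        then have "Di n u (PA (sc n j)) + 1 = Di n u v \<or> Di n u (PA j) + 1 = Di n u v"
          using Di_tow[OF uV vV, of "PA (sc n j)" "PA j" 1] PB j sc_lt[OF j] sc_pos[OF j] by auto
        moreover have "(PA (sc n j), v) \<in> Sn_adj n" "(PA j, v) \<in> Sn_adj n"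
          using PB j by (auto simp: adj_simps sc_lt)
        ultimately show ?thesis by blast
      next
        case False
        then have "2 \<le> ?c" using c0 \<open>?c \<noteq> 0\<close> by linarith
        then have "Di n u (PB (sc n j)) + 1 = Di n u v \<or> Di n u (PB (pr n j)) + 1 = Di n u v"
          using Di_tow[OF uV vV, of "PB (sc n j)" "PB (pr n j)" 2] PB j pr_lt[OF j] pr_pos[OF j]
            sc_lt[OF j] sc_pos[OF j] by auto
        moreover have "(PB (sc n j), v) \<in> Sn_adj n" "(PB (pr n j), v) \<in> Sn_adj n"
          using PB j by (auto simp: adj_simps pr_lt sc_pr sc_lt)
        ultimately show ?thesis by blast
      qed
    qed
  next
    case (PC j)
    have j: "j < n" using vV PC by simp
    consider "lev u = 0" | "lev u = 1" | "lev u = 2" using lu by linarith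
    then show ?thesis
    proof cases
      case 1
      have "Di n u (PB j) + 1 = Di n u v" using PC 1 unfolding Di_def by auto
      moreover have "(PB j, v) \<in> Sn_adj n" using PC j by (auto simp: adj_simps)
      ultimately show ?thesis by blast
    next
      case 3
      have "Di n u (PD j) + 1 = Di n u v" using PC 3 unfolding Di_def by auto
      moreover have "(PD j, v) \<in> Sn_adj n" using PC j by (auto simp: adj_simps)
      ultimately show ?thesis by blast
    next
      case 2
      then obtain i where ui: "u = PC i" by (cases u) auto
      have "?c \<noteq> 0"
      proof
        assume "?c = 0"
        then have "pos u = pos v" using cz by simp
        then have "u = v" using PC 2 pos_lev_inj by simp
        then show False using ne by simp
      qed
      moreover have "even ?c" using ui PC cdi_even1 by simp
      ultimately have "2 \<le> ?c" using c0 by presburger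
      then have "Di n u (PC (sc n j)) + 1 = Di n u v \<or> Di n u (PC (pr n j)) + 1 = Di n u v"
        using Di_tow[OF uV vV, of "PC (sc n j)" "PC (pr n j)" 2] PC j pr_lt[OF j] pr_pos[OF j]
          sc_lt[OF j] sc_pos[OF j] by auto
      moreover have "(PC (sc n j), v) \<in> Sn_adj n" "(PC (pr n j), v) \<in> Sn_adj n"
        using PC j by (auto simp: adj_simps pr_lt sc_pr sc_lt)
      ultimately show ?thesis by blast
    qed
  next
    case (PD j)
    have j: "j < n" using vV PD by simp
    show ?thesis
    proof (cases "lev u \<le> 1")
      case True
      have "Di n u (PC j) + 1 = Di n u v" using PD True lu unfolding Di_def by auto
      moreover have "(PC j, v) \<in> Sn_adj n" using PD j by (auto simp: adj_simps)
      ultimately show ?thesis by blast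
    next
      case False
      then obtain i where ui: "u = PD i" by (cases u) auto
      have "?c \<noteq> 0"
      proof
        assume "?c = 0"
        then have "pos u = pos v" using cz by simp
        then have "u = v" using PD ui pos_lev_inj by simp
        then show False using ne by simp
      qed
      moreover have "even ?c" using ui PD cdi_even1 by simp
      ultimately have "2 \<le> ?c" using c0 by presburger
      then have "Di n u (PD (sc n j)) + 1 = Di n u v \<or> Di n u (PD (pr n j)) + 1 = Di n u v"
        using Di_tow[OF uV vV, of "PD (sc n j)" "PD (pr n j)" 2] PD j pr_lt[OF j] pr_pos[OF j]
          sc_lt[OF j] sc_pos[OF j] by auto
      moreover have "(PD (sc n j), v) \<in> Sn_adj n" "(PD (pr n j), v) \<in> Sn_adj n"
        using PD j by (auto simp: adj_simps pr_lt sc_pr sc_lt)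
      ultimately show ?thesis by blast
    qed
  qed
qed



definition Dn :: "nat \<Rightarrow> pvert \<Rightarrow> pvert \<Rightarrow> nat" where
  "Dn n x y = nat (Di n x y)"

lemma Sn_verts_eq: "Sn_verts n = PA ` {..<n} \<union> PB ` {..<n} \<union> PC ` {..<n} \<union> PD ` {..<n}"
  unfolding Sn_verts_def by auto

lemma finite_V: "finite (Sn_verts n)"
  unfolding Sn_verts_eq by simp

lemma gm_Sn: "gm (Sn_verts n) (Sn_adj n) (Dn n)"
proof
  show "Sn_adj n \<subseteq> Sn_verts n \<times> Sn_verts n" using adj_V by auto
  show "(x, y) \<in> Sn_adj n \<Longrightarrow> (y, x) \<in> Sn_adj n" for x y unfolding Sn_adj_def by auto
  show "Dn n u u = 0" for u unfolding Dn_def using Di_self by simp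
  show "u \<in> Sn_verts n \<Longrightarrow> v \<in> Sn_verts n \<Longrightarrow> u \<noteq> v \<Longrightarrow> 0 < Dn n u v" for u v
    unfolding Dn_def using Di_zero Di_nonneg by (metis zero_less_nat_eq order_neq_le_trans)
  show "Dn n u v = Dn n v u" for u v unfolding Dn_def using Di_sym by simp
  show "u \<in> Sn_verts n \<Longrightarrow> (x, y) \<in> Sn_adj n \<Longrightarrow> Dn n u y \<le> Dn n u x + 1" for u x y
    unfolding Dn_def using Di_lip[of u n x y] Di_nonneg[of u n x] adj_V[of x y n] by auto
  show "u \<in> Sn_verts n \<Longrightarrow> v \<in> Sn_verts n \<Longrightarrow> 0 < Dn n u v \<Longrightarrow> \<exists>y. (y, v) \<in> Sn_adj n \<and> Dn n u y + 1 = Dn n u v" for u v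
  proof -
    assume a: "u \<in> Sn_verts n" "v \<in> Sn_verts n" "0 < Dn n u v"
    then have "Di n u v > 0" unfolding Dn_def by simp
    then obtain y where y: "(y, v) \<in> Sn_adj n" "Di n u y + 1 = Di n u v" using Di_pred a by blast
    have "0 \<le> Di n u y" using Di_nonneg a y adj_V by blast
    then show ?thesis using y unfolding Dn_def by (intro exI[of _ y]) auto
  qed
  show "finite (Sn_verts n)" by (rule finite_V)
qed



abbreviation "MMD n \<equiv> gm.mmd (Sn_adj n) (Dn n)"

lemma mmd_iff: "MMD n u v \<longleftrightarrow> (\<forall>x. (u, x) \<in> Sn_adj n \<longrightarrow> Dn n x v \<le> Dn n u v) \<and> (\<forall>y. (v, y) \<in> Sn_adj n \<longrightarrow> Dn n u y \<le> Dn n u v)"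
  by (rule gm.mmd_def[OF gm_Sn])

lemma Di_max: "u \<in> Sn_verts n \<Longrightarrow> v \<in> Sn_verts n \<Longrightarrow> Di n u v \<le> 2 + (int n + 1) div 2"
proof -
  assume a: "u \<in> Sn_verts n" "v \<in> Sn_verts n"
  have "2 * cdi (2 * int n) (pos u) (pos v) \<le> 2 * int n" using cdi_le[of "2 * int n"] by simp
  then have "(cdi (2 * int n) (pos u) (pos v) + 1) div 2 \<le> (int n + 1) div 2"
    by (intro zdiv_mono1) auto
  moreover have "\<bar>lev u - lev v\<bar> \<le> 2" using lev_le[of u] lev_le[of v] by auto
  ultimately show ?thesis unfolding Di_def by linarith
qed

lemma mmd_top:
  assumes "u \<in> Sn_verts n" "v \<in> Sn_verts n" "Di n u v = 2 + (int n + 1) div 2"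
  shows "MMD n u v"
proof -
  have "Dn n x y \<le> Dn n u v" if "x \<in> Sn_verts n" "y \<in> Sn_verts n" for x y
    using Di_max[OF that] assms(3) unfolding Dn_def by (simp add: nat_mono)
  then show ?thesis unfolding mmd_iff using adj_V assms by blast
qed

lemma adjA_lev: "(PA i, x) \<in> Sn_adj n \<Longrightarrow> lev x = 0"
  by (cases x) (auto simp: adj_simps)

lemma mmd_AA:
  assumes "i < n" "j < n" "Di n (PA i) (PA j) = (int n + 1) div 2"
  shows "MMD n (PA i) (PA j)"
proof -
  have b: "Di n x y \<le> (int n + 1) div 2" if "lev x = 0" "lev y = 0" for x y
  proof -
    have "2 * cdi (2 * int n) (pos x) (pos y) \<le> 2 * int n" using cdi_le[of "2 * int n"] by simp
    then have "(cdi (2 * int n) (pos x) (pos y) + 1) div 2 \<le> (int n + 1) div 2"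
      by (intro zdiv_mono1) auto
    then show ?thesis unfolding Di_def using that by simp
  qed
  have "Dn n x (PA j) \<le> Dn n (PA i) (PA j)" if "(PA i, x) \<in> Sn_adj n" for x
    using b[of x "PA j"] adjA_lev[OF that] assms(3) unfolding Dn_def by (simp add: nat_mono)
  moreover have "Dn n (PA i) y \<le> Dn n (PA i) (PA j)" if "(PA j, y) \<in> Sn_adj n" for y
    using b[of "PA i" y] adjA_lev[OF that] assms(3) unfolding Dn_def by (simp add: nat_mono)
  ultimately show ?thesis unfolding mmd_iff by blast
qed

lemma srs_cover:
  assumes "strong_resolving_set (Sn_verts n) (Sn_adj n) S" "u \<in> Sn_verts n" "v \<in> Sn_verts n" "u \<noteq> v" "MMD n u v"
  shows "u \<in> S \<or> v \<in> S"
proof -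
  obtain w where w: "w \<in> S" "strongly_resolves (Sn_adj n) w u v"
    using assms unfolding strong_resolving_set_def by blast
  have "w \<in> Sn_verts n" using w assms(1) unfolding strong_resolving_set_def by blast
  then have "w = u \<or> w = v" using gm.mmd_not_resolved[OF gm_Sn assms(2,3) _ assms(5) w(2)] by blast
  then show ?thesis using w by blast
qed

lemma not_mmd_down:
  assumes uV: "u \<in> Sn_verts n" and vV: "v \<in> Sn_verts n" and lv: "lev u \<le> lev v"
    and v: "v = PB j \<or> v = PC j"
  shows "\<not> MMD n u v"
proof -
  define y where "y = (if v = PB j then PC j else PD j)"
  have j: "j < n" using v vV by auto
  have e: "(v, y) \<in> Sn_adj n" using v j unfolding y_def by (auto simp: adj_simps)
  have "Di n u y = Di n u v + 1" using v lv unfolding y_def Di_def by auto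
  moreover have "0 \<le> Di n u v" using Di_nonneg uV vV by blast
  ultimately have "Dn n u y > Dn n u v" unfolding Dn_def by simp
  then show ?thesis using e unfolding mmd_iff by fastforce
qed

lemma not_mmd_AA:
  assumes i: "i < n" and j: "j < n" and c: "cdi (2 * int n) (2 * int i) (2 * int j) + 1 \<le> int n"
  shows "\<not> MMD n (PA i) (PA j)"
proof -
  let ?c = "cdi (2 * int n) (2 * int i) (2 * int j)"
  have "cdi (2 * int n) (2 * int i) (2 * int j + 1) = ?c + 1 \<or> cdi (2 * int n) (2 * int i) (2 * int (pr n j) + 1) = ?c + 1"
    apply (rule cdi_away)
    using i j c pr_pos[OF j] pr_lt[OF j] by auto
  moreover have "even ?c" using cdi_even0 by blast
  moreover have "0 \<le> ?c" using cdi_nonneg[of "2 * int i" "2 * int n" "2 * int j"] i j by simp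
  moreover have "(c' + 1) div 2 = (c + 1) div 2 + 1" if "even c" "c' = c + 1" for c c' :: int
    using that by presburger
  ultimately have "Di n (PA i) (PB j) = Di n (PA i) (PA j) + 1 \<or> Di n (PA i) (PB (pr n j)) = Di n (PA i) (PA j) + 1"
    unfolding Di_def by auto
  moreover have "0 \<le> Di n (PA i) (PA j)" using Di_nonneg i j by simp
  ultimately have "Dn n (PA i) (PB j) > Dn n (PA i) (PA j) \<or> Dn n (PA i) (PB (pr n j)) > Dn n (PA i) (PA j)"
    unfolding Dn_def by auto
  moreover have "(PA j, PB j) \<in> Sn_adj n" "(PA j, PB (pr n j)) \<in> Sn_adj n"
    using j by (auto simp: adj_simps pr_lt sc_pr)
  ultimately show ?thesis unfolding mmd_iff by fastforce
qed

lemma not_mmd_cases: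
  assumes uV: "u \<in> Sn_verts n" and vV: "v \<in> Sn_verts n"
    and nu: "\<And>i. u \<noteq> PD i" and nv: "\<And>i. v \<noteq> PD i"
    and AA: "\<And>i j. u = PA i \<Longrightarrow> v = PA j \<Longrightarrow> cdi (2 * int n) (2 * int i) (2 * int j) + 1 \<le> int n"
  shows "\<not> MMD n u v"
proof (cases u)
  case (PA i)
  show ?thesis
  proof (cases v)
    case (PA j)
    then show ?thesis using not_mmd_AA AA \<open>u = PA i\<close> uV vV by auto
  next
    case (PB j) then show ?thesis using not_mmd_down uV vV \<open>u = PA i\<close> by auto
  next
    case (PC j) then show ?thesis using not_mmd_down uV vV \<open>u = PA i\<close> by auto
  next
    case (PD j) then show ?thesis using nv by auto
  qed
next
  case (PB i)
  have "\<not> MMD n v u" if "lev v \<le> lev u" using not_mmd_down[OF vV uV that] PB by auto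
  moreover have "\<not> MMD n u v" if "lev u \<le> lev v" "v = PB j \<or> v = PC j" for j
    using not_mmd_down[OF uV vV that] by auto
  ultimately show ?thesis using PB nv gm.mmd_sym[OF gm_Sn, of n]
    by (cases v) (metis lev.simps order_refl zero_le_one)+
next
  case (PC i)
  have "\<not> MMD n v u" if "lev v \<le> lev u" using not_mmd_down[OF vV uV that] PC by auto
  moreover have "\<not> MMD n u v" if "lev u \<le> lev v" "v = PB j \<or> v = PC j" for j
    using not_mmd_down[OF uV vV that] by auto
  ultimately show ?thesis using PC nv gm.mmd_sym[OF gm_Sn, of n]
    by (cases v) (metis lev.simps order_refl zero_le_one)+
next
  case (PD i) then show ?thesis using nu by auto
qed



definition fo :: "nat \<Rightarrow> nat \<Rightarrow> nat \<Rightarrow> nat" where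
  "fo n m i = (if i + m < n then i + m else i + m - n)"

lemma fo_lt: "i < n \<Longrightarrow> m < n \<Longrightarrow> fo n m i < n"
  unfolding fo_def by auto

lemma fo_inj: "i < n \<Longrightarrow> j < n \<Longrightarrow> fo n m i = fo n m j \<Longrightarrow> i = j"
  unfolding fo_def by (auto split: if_splits)

lemma Di_odd_pair:
  assumes n: "n = 2 * m + 1" and i: "i < n"
  shows "Di n (PA i) (PD (fo n m i)) = 2 + (int n + 1) div 2"
proof -
  have "cdi (2 * int n) (2 * int i) (2 * int (fo n m i) + 1) = int n"
  proof (cases "i + m < n")
    case True
    then show ?thesis unfolding cdi_def fo_def using n by simp
  next
    case False
    then have "int (fo n m i) = int i + int m - int n" unfolding fo_def by auto
    then show ?thesis unfolding cdi_def using n by simp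
  qed
  then show ?thesis unfolding Di_def by simp
qed

lemma Di_even_AA:
  assumes n: "n = 2 * m" and i: "i < m"
  shows "Di n (PA i) (PA (i + m)) = (int n + 1) div 2"
proof -
  have "cdi (2 * int n) (2 * int i) (2 * int (i + m)) = int n"
    unfolding cdi_def using n by simp
  then show ?thesis unfolding Di_def by simp
qed

lemma Di_even_BD:
  assumes n: "n = 2 * m" and j: "j < n"
  shows "Di n (PB j) (PD (fo n m j)) = 2 + (int n + 1) div 2"
proof -
  have "cdi (2 * int n) (2 * int j + 1) (2 * int (fo n m j) + 1) = int n"
  proof (cases "j + m < n")
    case True
    then show ?thesis unfolding cdi_def fo_def using n by simp
  next
    case False
    then have "int (fo n m j) = int j + int m - int n" unfolding fo_def by auto
    then show ?thesis unfolding cdi_def using n by simp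
  qed
  then show ?thesis unfolding Di_def by simp
qed

lemma srs_fin: "strong_resolving_set (Sn_verts n) (Sn_adj n) S \<Longrightarrow> finite S"
  unfolding strong_resolving_set_def using finite_V finite_subset by blast

lemma lower_odd:
  assumes n: "n = 2 * m + 1" and S: "strong_resolving_set (Sn_verts n) (Sn_adj n) S"
  shows "n \<le> card S"
proof -
  have m: "m < n" using n by simp
  have cov: "PA i \<in> S \<or> PD (fo n m i) \<in> S" if i: "i < n" for i
  proof -
    have "MMD n (PA i) (PD (fo n m i))"
      using mmd_top Di_odd_pair[OF n i] i fo_lt[OF i m] by simp
    then show ?thesis using srs_cover[OF S] i fo_lt[OF i m] by simp
  qed
  define g where "g i = (if PA i \<in> S then PA i else PD (fo n m i))" for i
  have "inj_on g {..<n}"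
    unfolding inj_on_def g_def using fo_inj by auto
  moreover have "g ` {..<n} \<subseteq> S" unfolding g_def using cov by auto
  ultimately have "card {..<n} \<le> card S" using card_inj_on_le srs_fin[OF S] by blast
  then show ?thesis by simp
qed

lemma lower_even:
  assumes n: "n = 2 * m" and m0: "0 < m" and S: "strong_resolving_set (Sn_verts n) (Sn_adj n) S"
  shows "n + m \<le> card S"
proof -
  have m: "m < n" using n m0 by simp
  have cov1: "PA i \<in> S \<or> PA (i + m) \<in> S" if i: "i < m" for i
  proof -
    have "MMD n (PA i) (PA (i + m))"
      using mmd_AA Di_even_AA[OF n i] i n by simp
    then show ?thesis using srs_cover[OF S] i n by simp
  qed
  have cov2: "PB j \<in> S \<or> PD (fo n m j) \<in> S" if j: "j < n" for j
  proof -
    have "MMD n (PB j) (PD (fo n m j))"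
      using mmd_top Di_even_BD[OF n j] j fo_lt[OF j m] by simp
    then show ?thesis using srs_cover[OF S] j fo_lt[OF j m] by simp
  qed
  define g1 where "g1 i = (if PA i \<in> S then PA i else PA (i + m))" for i
  define g2 where "g2 j = (if PB j \<in> S then PB j else PD (fo n m j))" for j
  have i1: "inj_on g1 {..<m}"
    unfolding inj_on_def g1_def by auto
  have i2: "inj_on g2 {..<n}"
    unfolding inj_on_def g2_def using fo_inj by auto
  have d: "g1 ` {..<m} \<inter> g2 ` {..<n} = {}"
    unfolding g1_def g2_def by auto
  have s: "g1 ` {..<m} \<union> g2 ` {..<n} \<subseteq> S" unfolding g1_def g2_def using cov1 cov2 by auto
  have "card (g1 ` {..<m} \<union> g2 ` {..<n}) = m + n"
    using card_Un_disjoint[OF _ _ d] card_image[OF i1] card_image[OF i2] by simp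
  then show ?thesis using card_mono[OF srs_fin[OF S] s] by simp
qed

lemma upper_cover:
  assumes SV: "S \<subseteq> Sn_verts n"
    and cov: "\<And>u v. u \<in> Sn_verts n \<Longrightarrow> v \<in> Sn_verts n \<Longrightarrow> u \<notin> S \<Longrightarrow> v \<notin> S \<Longrightarrow> \<not> MMD n u v"
  shows "strong_resolving_set (Sn_verts n) (Sn_adj n) S"
  unfolding strong_resolving_set_def
  using SV gm.cover_resolves[OF gm_Sn SV] cov by blast

lemma upper_odd:
  assumes n: "odd n"
  shows "strong_resolving_set (Sn_verts n) (Sn_adj n) (PD ` {..<n})"
proof (rule upper_cover)
  show "PD ` {..<n} \<subseteq> Sn_verts n" by auto
  fix u v assume uv: "u \<in> Sn_verts n" "v \<in> Sn_verts n" "u \<notin> PD ` {..<n}" "v \<notin> PD ` {..<n}"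
  show "\<not> MMD n u v"
  proof (rule not_mmd_cases[OF uv(1,2)])
    show "u \<noteq> PD i" for i using uv by auto
    show "v \<noteq> PD i" for i using uv by auto
    fix i j assume "u = PA i" "v = PA j"
    have "2 * cdi (2 * int n) (2 * int i) (2 * int j) \<le> 2 * int n" using cdi_le[of "2 * int n"] by simp
    moreover have "even (cdi (2 * int n) (2 * int i) (2 * int j))" using cdi_even0 by blast
    moreover have "odd (int n)" using n by simp
    ultimately show "cdi (2 * int n) (2 * int i) (2 * int j) + 1 \<le> int n" by presburger
  qed
qed

lemma upper_even:
  assumes n: "n = 2 * m"
  shows "strong_resolving_set (Sn_verts n) (Sn_adj n) (PD ` {..<n} \<union> PA ` {..<m})"
proof (rule upper_cover)
  show "PD ` {..<n} \<union> PA ` {..<m} \<subseteq> Sn_verts n" using n by auto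
  fix u v assume uv: "u \<in> Sn_verts n" "v \<in> Sn_verts n" "u \<notin> PD ` {..<n} \<union> PA ` {..<m}"
    "v \<notin> PD ` {..<n} \<union> PA ` {..<m}"
  show "\<not> MMD n u v"
  proof (rule not_mmd_cases[OF uv(1,2)])
    show "u \<noteq> PD i" for i using uv by auto
    show "v \<noteq> PD i" for i using uv by auto
    fix i j assume "u = PA i" "v = PA j"
    then have "m \<le> i" "m \<le> j" "i < n" "j < n" using uv by auto
    then have "\<bar>2 * int i - 2 * int j\<bar> + 1 \<le> int n" using n by auto
    then show "cdi (2 * int n) (2 * int i) (2 * int j) + 1 \<le> int n" using cdi_le_abs[of "2 * int n" "2 * int i" "2 * int j"] by linarith
  qed
qed

lemma sdim_eq:
  assumes "strong_resolving_set V E S0" "card S0 = t" "\<And>S. strong_resolving_set V E S \<Longrightarrow> t \<le> card S"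
  shows "sdim V E = t"
  unfolding sdim_def
  by (rule Least_equality) (use assms in auto)

theorem theorem3p2:
  fixes n :: nat
  assumes "n \<ge> 3"
  shows "sdim (Sn_verts n) (Sn_adj n) = (if odd n then n else 3 * n div 2)"
proof (cases "odd n")
  case True
  then obtain m where n: "n = 2 * m + 1" using oddE by blast
  have "card (PD ` {..<n}) = n" by (simp add: card_image inj_on_def)
  then have "sdim (Sn_verts n) (Sn_adj n) = n"
    using sdim_eq[OF upper_odd[OF True]] lower_odd[OF n] by blast
  then show ?thesis using True by simp
next
  case False
  then obtain m where n: "n = 2 * m" using evenE by blast
  have m0: "0 < m" using n assms by simp
  have "card (PD ` {..<n} \<union> PA ` {..<m}) = n + m"
    by (subst card_Un_disjoint) (auto simp: card_image inj_on_def)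
  then have "sdim (Sn_verts n) (Sn_adj n) = n + m"
    using sdim_eq[OF upper_even[OF n]] lower_even[OF n m0] by blast
  then show ?thesis using False n by simp
qed


end
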